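(* Let $p\ge 1$ and $c>0$ be constants. For every $\beta\ge 0$ the boundary value problem $$x'''+c\,x^p\, x''=0\ \text{ on } [0,\infty),\qquad x(0)=0=x'(0),\qquad \lim_{t\to\infty}x'(t)=\beta$$ has a solution. *)

theory Defs
  imports Complex_Main
begin

end

theory Submission imports Defs "HOL-Analysis.Analysis" begin

lemma D:
  fixes f :: "real \<Rightarrow> real"
  assumes "continuous_on {0..} f" "0 \<le> t"
  shows "((\<lambda>u. integral {0..u} f) has_real_derivative f t) (at t within {0..})"
proof -
  have "continuous_on {0..t+1} f" using continuous_on_subset assms(1) by fastforce
  then have "((\<lambda>u. integral {0..u} f) has_real_derivative f t) (at t within {0..t+1})"
    using integral_has_real_derivative assms(2) by auto
  moreover have "at t within {0..t+1} = at t within {0..}"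
    by (rule at_within_nhd[where S="{..<t+1}"]) auto
  ultimately show ?thesis by simp
qed

lemma Dcont:
  fixes f :: "real \<Rightarrow> real"
  assumes "continuous_on {0..} f"
  shows "continuous_on {0..} (\<lambda>u. integral {0..u} f)"
  using D[OF assms] by (meson DERIV_continuous atLeast_iff continuous_on_eq_continuous_within)

lemma Dint: "0 \<le> r \<Longrightarrow> continuous_on {0..} f \<Longrightarrow> (f::real\<Rightarrow>real) integrable_on {0..r}"
  by (meson atLeastAtMost_iff atLeast_iff continuous_on_subset integrable_continuous_real subsetI)

lemma intdiff:
  fixes f g :: "real \<Rightarrow> real"
  assumes "continuous_on {0..} f" "continuous_on {0..} g" "0 \<le> r"
    "\<And>s. 0 \<le> s \<Longrightarrow> s \<le> r \<Longrightarrow> \<bar>f s - g s\<bar> \<le> B" "0 \<le> B"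
  shows "\<bar>integral {0..r} f - integral {0..r} g\<bar> \<le> r * B"
proof -
  have "((\<lambda>s. f s - g s) has_integral (integral {0..r} f - integral {0..r} g)) {0..r}"
    using Dint[OF assms(3,1)] Dint[OF assms(3,2)] by (intro has_integral_diff) auto
  from has_integral_bound_real[OF assms(5) _ this, of "{}"] assms(3,4) show ?thesis
    by (auto simp: mult.commute)
qed

lemma intle:
  fixes f g :: "real \<Rightarrow> real"
  assumes "continuous_on {0..} f" "continuous_on {0..} g" "0 \<le> r"
    "\<And>s. 0 \<le> s \<Longrightarrow> s \<le> r \<Longrightarrow> f s \<le> g s"
  shows "integral {0..r} f \<le> integral {0..r} g"
  using Dint[OF assms(3,1)] Dint[OF assms(3,2)] assms(4) by (intro integral_le) auto

lemma intnonneg: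
  fixes f :: "real \<Rightarrow> real"
  assumes "continuous_on {0..} f" "0 \<le> r" "\<And>s. 0 \<le> s \<Longrightarrow> s \<le> r \<Longrightarrow> 0 \<le> f s"
  shows "0 \<le> integral {0..r} f"
  using intle[OF continuous_on_const assms(1,2), of 0] assms(3) by simp

lemma intmono:
  fixes f :: "real \<Rightarrow> real"
  assumes "continuous_on {0..} f" "0 \<le> s" "s \<le> r" "\<And>u. 0 \<le> u \<Longrightarrow> 0 \<le> f u"
  shows "integral {0..s} f \<le> integral {0..r} f"
  using assms Dint[OF _ assms(1), of s] Dint[OF _ assms(1), of r]
  by (intro integral_subset_le) auto

lemma exp_lip:
  fixes a b :: real assumes "a \<le> 0" "b \<le> 0"
  shows "\<bar>exp a - exp b\<bar> \<le> \<bar>a - b\<bar>"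
proof -
  have *: "exp a - exp b \<le> a - b" if "b \<le> a" "a \<le> 0" for a b :: real
  proof -
    have "exp a - exp b = exp a * (1 - exp (b - a))" by (simp add: algebra_simps exp_diff)
    also have "\<dots> \<le> 1 * (a - b)"
    proof (rule mult_mono)
      show "exp a \<le> 1" using that by simp
      show "1 - exp (b - a) \<le> a - b" using exp_ge_add_one_self[of "b-a"] by linarith
    qed (use that in auto)
    finally show ?thesis by simp
  qed
  show ?thesis using *[of b a] *[of a b] assms by (cases "b \<le> a") auto
qed

lemma powr_lip:
  fixes a b M p :: real
  assumes "0 \<le> a" "0 \<le> b" "a \<le> M" "b \<le> M" "1 \<le> p"
  shows "\<bar>a powr p - b powr p\<bar> \<le> p * (M + 1) powr (p - 1) * \<bar>a - b\<bar>"
proof -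
  have *: "b powr p - a powr p \<le> p * (M + 1) powr (p - 1) * (b - a)"
    if ab: "0 \<le> a" "a < b" "b \<le> M" for a b
  proof -
    have "continuous_on {a..b} (\<lambda>u. u powr p)"
      using ab assms(5) by (intro continuous_on_powr') (auto intro: continuous_intros)
    moreover have "\<forall>x. a < x \<and> x < b \<longrightarrow> (\<lambda>u. u powr p) differentiable (at x)"
    proof (intro allI impI)
      fix x assume "a < x \<and> x < b"
      then have "DERIV (\<lambda>u. u powr p) x :> p * x powr (p - 1)" using ab by (intro has_real_derivative_powr) auto
      then show "(\<lambda>u. u powr p) differentiable (at x)" using real_differentiable_def by blast
    qed
    ultimately obtain l z where z: "a < z" "z < b" "DERIV (\<lambda>u. u powr p) z :> l"
      "b powr p - a powr p = (b - a) * l"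
      using MVT[OF ab(2)] by blast
    have "DERIV (\<lambda>u. u powr p) z :> p * z powr (p - 1)"
      using z ab by (intro has_real_derivative_powr) auto
    with z have l: "l = p * z powr (p - 1)" using DERIV_unique by blast
    have "z powr (p - 1) \<le> (M + 1) powr (p - 1)"
      using z ab assms(5) by (intro powr_mono2) auto
    then have "l \<le> p * (M + 1) powr (p - 1)" using l assms(5) by simp
    then show ?thesis using z ab by (simp add: mult_left_mono mult.commute)
  qed
  have m: "x powr p \<le> y powr p" if "0 \<le> x" "x \<le> y" for x y
    using that assms(5) by (intro powr_mono2) auto
  show ?thesis using *[of a b] *[of b a] assms m[of a b] m[of b a]
    by (cases a b rule: linorder_cases) (auto simp: abs_minus_commute)
qed


lemma intdiff2:
  fixes f g B :: "real \<Rightarrow> real"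
  assumes "continuous_on {0..} f" "continuous_on {0..} g" "continuous_on {0..} B" "0 \<le> r"
    "\<And>s. 0 \<le> s \<Longrightarrow> s \<le> r \<Longrightarrow> \<bar>f s - g s\<bar> \<le> B s"
  shows "\<bar>integral {0..r} f - integral {0..r} g\<bar> \<le> integral {0..r} B"
proof -
  have i: "integral {0..r} (\<lambda>s. g s + B s) = integral {0..r} g + integral {0..r} B"
       "integral {0..r} (\<lambda>s. f s + B s) = integral {0..r} f + integral {0..r} B"
    using Dint[OF assms(4,1)] Dint[OF assms(4,2)] Dint[OF assms(4,3)] by (auto intro!: integral_add)
  have "integral {0..r} f \<le> integral {0..r} (\<lambda>s. g s + B s)"
    using assms(1-4) assms(5)[unfolded abs_le_iff] by (intro intle) (auto intro!: continuous_intros simp: algebra_simps)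
  moreover have "integral {0..r} g \<le> integral {0..r} (\<lambda>s. f s + B s)"
    using assms(1-4) assms(5)[unfolded abs_le_iff] by (intro intle) (auto intro!: continuous_intros simp: algebra_simps)
  ultimately show ?thesis using i by linarith
qed

definition ww :: "real \<Rightarrow> real \<Rightarrow> real" where "ww p r = p * (r^2 + 1) powr (p - 1) * r^2"
definition WW :: "real \<Rightarrow> real \<Rightarrow> real" where "WW p t = integral {0..t} (ww p)"
definition clip :: "real \<Rightarrow> real" where "clip v = max 0 (min 1 v)"
definition HH :: "real \<Rightarrow> real \<Rightarrow> (real \<Rightarrow> real) \<Rightarrow> real \<Rightarrow> real"
  where "HH c p g s = clip (exp (2*c * WW p s) * g s)"
definition XX1 where "XX1 c p g t = integral {0..t} (HH c p g)"
definition XX where "XX c p g t = integral {0..t} (XX1 c p g)"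
definition GG where "GG c p g t = integral {0..t} (\<lambda>r. XX c p g r powr p)"
definition FF where "FF c p g t = exp (-(2*c) * WW p t) * exp (- c * GG c p g t)"

lemma clip_lip: "\<bar>clip a - clip b\<bar> \<le> \<bar>a - b\<bar>"
  unfolding clip_def by (auto simp: max_def min_def)

lemma clip_bounds: "0 \<le> clip a" "clip a \<le> 1"
  unfolding clip_def by auto

lemma ww_cont: "continuous_on S (ww p)"
proof -
  have "\<forall>x\<in>S. x^2 + 1 \<noteq> (0::real)" by (metis add_nonneg_pos not_one_le_zero zero_le_power2 zero_less_one order_less_irrefl)
  then show ?thesis unfolding ww_def by (intro continuous_intros) auto
qed

lemma ww_nonneg: "0 \<le> p \<Longrightarrow> 0 \<le> ww p r"
  unfolding ww_def by simp

lemma WW_deriv: "0 \<le> t \<Longrightarrow> (WW p has_real_derivative ww p t) (at t within {0..})"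
  unfolding WW_def[abs_def] using D[OF ww_cont] by blast

lemma WW_cont: "continuous_on {0..} (WW p)"
  unfolding WW_def[abs_def] using Dcont[OF ww_cont] by blast

lemma WW_mono: "0 \<le> p \<Longrightarrow> 0 \<le> s \<Longrightarrow> s \<le> t \<Longrightarrow> WW p s \<le> WW p t"
  unfolding WW_def using intmono[OF ww_cont] ww_nonneg by blast

lemma WW_nonneg: "0 \<le> p \<Longrightarrow> 0 \<le> t \<Longrightarrow> 0 \<le> WW p t"
  using WW_mono[of p 0 t] by (simp add: WW_def)

context
  fixes c p :: real and g :: "real \<Rightarrow> real"
  assumes c: "c > 0" and p: "p \<ge> 1" and g: "continuous_on {0..} g"
begin

lemma HH_cont: "continuous_on {0..} (HH c p g)"
  unfolding HH_def[abs_def] clip_def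
  by (intro continuous_intros WW_cont g)

lemma HH_bounds: "0 \<le> HH c p g s" "HH c p g s \<le> 1"
  unfolding HH_def by (auto simp: clip_bounds)

lemma XX1_deriv: "0 \<le> t \<Longrightarrow> (XX1 c p g has_real_derivative HH c p g t) (at t within {0..})"
  unfolding XX1_def[abs_def] using D[OF HH_cont] by blast

lemma XX1_cont: "continuous_on {0..} (XX1 c p g)"
  unfolding XX1_def[abs_def] using Dcont[OF HH_cont] by blast

lemma XX1_bounds: "0 \<le> r \<Longrightarrow> 0 \<le> XX1 c p g r" "0 \<le> r \<Longrightarrow> XX1 c p g r \<le> r"
proof -
  assume r: "0 \<le> r"
  show "0 \<le> XX1 c p g r" unfolding XX1_def using intnonneg[OF HH_cont r] HH_bounds by blast
  have "XX1 c p g r \<le> integral {0..r} (\<lambda>_. 1)"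
    unfolding XX1_def using r HH_bounds by (intro intle HH_cont) auto
  then show "XX1 c p g r \<le> r" using r by simp
qed

lemma XX_deriv: "0 \<le> t \<Longrightarrow> (XX c p g has_real_derivative XX1 c p g t) (at t within {0..})"
  unfolding XX_def[abs_def] using D[OF XX1_cont] by blast

lemma XX_cont: "continuous_on {0..} (XX c p g)"
  unfolding XX_def[abs_def] using Dcont[OF XX1_cont] by blast

lemma XX_bounds: "0 \<le> r \<Longrightarrow> 0 \<le> XX c p g r" "0 \<le> r \<Longrightarrow> XX c p g r \<le> r^2"
proof -
  assume r: "0 \<le> r"
  show "0 \<le> XX c p g r" unfolding XX_def using intnonneg[OF XX1_cont r] XX1_bounds by blast
  have "XX c p g r \<le> integral {0..r} (\<lambda>_. r)"
    unfolding XX_def using r XX1_bounds by (intro intle XX1_cont) (auto intro: order_trans)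
  then show "XX c p g r \<le> r^2" using r by (simp add: power2_eq_square)
qed

lemma XXp_cont: "continuous_on {0..} (\<lambda>r. XX c p g r powr p)"
  using XX_bounds p by (intro continuous_on_powr' XX_cont continuous_intros) auto

lemma GG_deriv: "0 \<le> t \<Longrightarrow> (GG c p g has_real_derivative XX c p g t powr p) (at t within {0..})"
  unfolding GG_def[abs_def] using D[OF XXp_cont] by blast

lemma GG_cont: "continuous_on {0..} (GG c p g)"
  unfolding GG_def[abs_def] using Dcont[OF XXp_cont] by blast

lemma GG_nonneg: "0 \<le> t \<Longrightarrow> 0 \<le> GG c p g t"
  unfolding GG_def by (intro intnonneg XXp_cont) auto

lemma FF_cont: "continuous_on {0..} (FF c p g)"
  unfolding FF_def[abs_def] by (intro continuous_intros WW_cont GG_cont)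

lemma FF_bounds: "0 \<le> t \<Longrightarrow> 0 < FF c p g t" "0 \<le> t \<Longrightarrow> FF c p g t \<le> 1"
proof -
  assume t: "0 \<le> t"
  show "0 < FF c p g t" unfolding FF_def by simp
  have "exp (-(2*c) * WW p t) \<le> 1" "exp (- c * GG c p g t) \<le> 1"
    using WW_nonneg[of p t] GG_nonneg[OF t] t c p by auto
  then show "FF c p g t \<le> 1" unfolding FF_def by (simp add: mult_le_one)
qed

end


lemma FF_contract:
  fixes g k :: "real \<Rightarrow> real"
  assumes c: "c > 0" and p: "p \<ge> 1" and g: "continuous_on {0..} g" and k: "continuous_on {0..} k"
    and Dd: "\<And>s. 0 \<le> s \<Longrightarrow> \<bar>g s - k s\<bar> \<le> Dd" and t: "0 \<le> t"
  shows "\<bar>FF c p g t - FF c p k t\<bar> \<le> Dd / 2"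
proof -
  define E where "E r = exp (2*c*WW p r)" for r
  have Emono: "E s \<le> E r" if "0 \<le> s" "s \<le> r" for s r
    unfolding E_def using WW_mono[of p s r] that c p by auto
  have Epos: "0 < E r" for r unfolding E_def by simp
  have Econt: "continuous_on {0..} E" unfolding E_def[abs_def] by (intro continuous_intros WW_cont)
  have Dd0: "0 \<le> Dd" using Dd[of 0] by simp
  have h1: "\<bar>HH c p g s - HH c p k s\<bar> \<le> E s * Dd" if s: "0 \<le> s" for s
  proof -
    have "\<bar>HH c p g s - HH c p k s\<bar> \<le> \<bar>E s * g s - E s * k s\<bar>"
      unfolding HH_def E_def using clip_lip by blast
    also have "\<dots> = E s * \<bar>g s - k s\<bar>" using Epos[of s] by (simp add: abs_mult right_diff_distrib[symmetric])
    also have "\<dots> \<le> E s * Dd" using Dd[OF s] Epos[of s] by (intro mult_left_mono) auto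
    finally show ?thesis .
  qed
  have h2: "\<bar>XX1 c p g r - XX1 c p k r\<bar> \<le> r * (E r * Dd)" if r: "0 \<le> r" for r
    unfolding XX1_def
  proof (rule intdiff[OF HH_cont[OF c p g] HH_cont[OF c p k] r])
    fix s assume "0 \<le> s" "s \<le> r"
    then show "\<bar>HH c p g s - HH c p k s\<bar> \<le> E r * Dd"
      using h1[of s] Emono[of s r] Dd0 by (meson mult_right_mono order_trans)
  qed (use Epos[of r] Dd0 in \<open>auto intro: mult_nonneg_nonneg less_imp_le\<close>)
  have h3: "\<bar>XX c p g r - XX c p k r\<bar> \<le> r * (r * (E r * Dd))" if r: "0 \<le> r" for r
    unfolding XX_def
  proof (rule intdiff[OF XX1_cont[OF c p g] XX1_cont[OF c p k] r])
    fix s assume s: "0 \<le> s" "s \<le> r"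
    have "s * (E s * Dd) \<le> r * (E r * Dd)"
      using s Emono[of s r] Dd0 Epos[of s] by (intro mult_mono mult_right_mono) auto
    then show "\<bar>XX1 c p g s - XX1 c p k s\<bar> \<le> r * (E r * Dd)"
      using h2[of s] s by linarith
  qed (use Epos[of r] Dd0 r in \<open>auto intro!: mult_nonneg_nonneg less_imp_le\<close>)
  have h4: "\<bar>XX c p g r powr p - XX c p k r powr p\<bar> \<le> ww p r * E r * Dd" if r: "0 \<le> r" for r
  proof -
    have "\<bar>XX c p g r powr p - XX c p k r powr p\<bar>
       \<le> p * (r^2 + 1) powr (p - 1) * \<bar>XX c p g r - XX c p k r\<bar>"
      using XX_bounds[OF c p g r] XX_bounds[OF c p k r] p by (intro powr_lip) auto
    also have "\<dots> \<le> p * (r^2 + 1) powr (p - 1) * (r * (r * (E r * Dd)))"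
      using h3[OF r] p by (intro mult_left_mono) auto
    also have "\<dots> = ww p r * E r * Dd" unfolding ww_def by (simp add: power2_eq_square algebra_simps)
    finally show ?thesis .
  qed
  have h5: "\<bar>GG c p g t - GG c p k t\<bar> \<le> integral {0..t} (\<lambda>r. ww p r * E r * Dd)"
    unfolding GG_def
    by (rule intdiff2[OF XXp_cont[OF c p g] XXp_cont[OF c p k] _ t h4])
       (intro continuous_intros ww_cont Econt)
  have der: "((\<lambda>r. Dd * E r / (2*c)) has_real_derivative ww p r * E r * Dd) (at r within {0..})"
    if "0 \<le> r" for r
    unfolding E_def
    by (rule derivative_eq_intros WW_deriv[OF that] refl | use c in simp)+
  have hi: "((\<lambda>r. ww p r * E r * Dd) has_integral (Dd * E t / (2*c) - Dd * E 0 / (2*c))) {0..t}"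
  proof (rule fundamental_theorem_of_calculus[OF t])
    fix x assume "x \<in> {0..t}"
    then show "((\<lambda>r. Dd * E r / (2*c)) has_vector_derivative ww p x * E x * Dd) (at x within {0..t})"
      using der[of x] has_field_derivative_subset[of _ _ x "{0..}" "{0..t}"]
      by (auto simp: has_real_derivative_iff_has_vector_derivative[symmetric])
  qed
  have E0: "E 0 = 1" unfolding E_def WW_def by simp
  have h6: "integral {0..t} (\<lambda>r. ww p r * E r * Dd) = Dd * E t / (2*c) - Dd * 1 / (2*c)"
    using integral_unique[OF hi] unfolding E0 .
  have "\<bar>FF c p g t - FF c p k t\<bar>
        = exp (-(2*c) * WW p t) * \<bar>exp (- c * GG c p g t) - exp (- c * GG c p k t)\<bar>"
    unfolding FF_def by (simp add: abs_mult right_diff_distrib[symmetric])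
  also have "\<dots> \<le> exp (-(2*c) * WW p t) * \<bar>(- c * GG c p g t) - (- c * GG c p k t)\<bar>"
    using GG_nonneg[OF c p g t] GG_nonneg[OF c p k t] c
    by (intro mult_left_mono exp_lip) auto
  also have "\<dots> = exp (-(2*c) * WW p t) * c * \<bar>GG c p g t - GG c p k t\<bar>"
  proof -
    have e: "- c * GG c p g t - - c * GG c p k t = c * (GG c p k t - GG c p g t)"
      by (simp add: algebra_simps)
    show ?thesis unfolding e abs_mult using c by (simp add: abs_minus_commute)
  qed
  also have "\<dots> \<le> exp (-(2*c) * WW p t) * c * (Dd * E t / (2*c) - Dd * 1 / (2*c))"
    using h5 h6 c by (intro mult_left_mono) auto
  also have "\<dots> = Dd * (1 - exp (-(2*c) * WW p t)) / 2"
    using c unfolding E_def by (simp add: field_simps exp_minus exp_add[symmetric])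
  also have "\<dots> \<le> Dd / 2" using Dd0 by (simp add: mult_left_le)
  finally show ?thesis .
qed


lemma int_at: "0 < t \<Longrightarrow> at t within {0..} = at (t::real)"
  by (rule at_within_interior) auto

lemma cont_of_deriv:
  fixes f :: "real \<Rightarrow> real"
  assumes "\<And>t. 0 \<le> t \<Longrightarrow> (f has_real_derivative f' t) (at t within {0..})"
  shows "continuous_on {0..} f"
  using assms by (meson DERIV_continuous atLeast_iff continuous_on_eq_continuous_within)

lemma limit:
  fixes x x1 G :: "real \<Rightarrow> real"
  assumes c: "c > 0" and p: "p \<ge> 1"
  and dx: "\<And>t. 0 \<le> t \<Longrightarrow> (x has_real_derivative x1 t) (at t within {0..})"
  and dx1: "\<And>t. 0 \<le> t \<Longrightarrow> (x1 has_real_derivative exp (- c * G t)) (at t within {0..})"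
  and dG: "\<And>t. 0 \<le> t \<Longrightarrow> (G has_real_derivative x t powr p) (at t within {0..})"
  and x10: "x1 0 = 0" and Gnn: "\<And>t. 0 \<le> t \<Longrightarrow> 0 \<le> G t" and xnn: "\<And>t. 0 \<le> t \<Longrightarrow> 0 \<le> x t"
  shows "\<exists>L>0. (x1 \<longlongrightarrow> L) at_top"
proof -
  have dx': "DERIV x t :> x1 t" if "0 < t" for t using dx[of t] that int_at[OF that] by auto
  have dx1': "DERIV x1 t :> exp (- c * G t)" if "0 < t" for t using dx1[of t] that int_at[OF that] by auto
  have dG': "DERIV G t :> x t powr p" if "0 < t" for t using dG[of t] that int_at[OF that] by auto
  have cx1: "continuous_on {0..} x1" by (rule cont_of_deriv[OF dx1])
  have inc: "x1 a < x1 b" if "0 \<le> a" "a < b" for a b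
  proof (rule DERIV_pos_imp_increasing_open[OF that(2)])
    show "continuous_on {a..b} x1" using that by (intro continuous_on_subset[OF cx1]) auto
    fix t assume "a < t" "t < b"
    then have "DERIV x1 t :> exp (- c * G t)" using dx1' that by auto
    then show "\<exists>y. DERIV x1 t :> y \<and> 0 < y" by (intro exI conjI) auto
  qed
  have mono: "x1 a \<le> x1 b" if "0 \<le> a" "a \<le> b" for a b
    using inc[of a b] that by (cases "a = b") auto
  define a1 where "a1 = x1 1"
  have a1: "a1 > 0" unfolding a1_def using inc[of 0 1] x10 by simp
  have xlow: "a1 * (t - 1) \<le> x t" if "1 \<le> t" for t
  proof -
    have "x 1 - a1 * 1 \<le> x t - a1 * t"
    proof (rule DERIV_nonneg_imp_nondecreasing[OF that])
      fix u assume u: "1 \<le> u" "u \<le> t"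
      have "DERIV (\<lambda>u. x u - a1 * u) u :> x1 u - a1"
        using dx'[of u] u by (auto intro!: derivative_eq_intros)
      moreover have "x1 u - a1 \<ge> 0" using mono[of 1 u] u unfolding a1_def by auto
      ultimately show "\<exists>y. DERIV (\<lambda>u. x u - a1 * u) u :> y \<and> 0 \<le> y" by blast
    qed
    then show ?thesis using xnn[of 1] by (simp add: algebra_simps)
  qed
  define t0 where "t0 = 1 + 1 / a1"
  have t0: "t0 > 1" unfolding t0_def using a1 by simp
  have xge1: "1 \<le> x t" if "t0 \<le> t" for t
  proof -
    have "1 = a1 * (t0 - 1)" unfolding t0_def using a1 by simp
    also have "\<dots> \<le> a1 * (t - 1)" using that a1 by (intro mult_left_mono) auto
    also have "\<dots> \<le> x t" using xlow[of t] that t0 by simp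
    finally show ?thesis .
  qed
  have Glow: "t - t0 \<le> G t" if "t0 \<le> t" for t
  proof -
    have "G t0 - t0 \<le> G t - t"
    proof (rule DERIV_nonneg_imp_nondecreasing[OF that])
      fix u assume u: "t0 \<le> u" "u \<le> t"
      have "DERIV (\<lambda>u. G u - u) u :> x u powr p - 1"
        using dG'[of u] u t0 by (auto intro!: derivative_eq_intros)
      moreover have "x u powr p \<ge> 1" using xge1[of u] u p by (intro ge_one_powr_ge_zero) auto
      ultimately show "\<exists>y. DERIV (\<lambda>u. G u - u) u :> y \<and> 0 \<le> y" by fastforce
    qed
    then show ?thesis using Gnn[of t0] t0 by simp
  qed
  have x1up: "x1 t \<le> x1 t0 + 1 / c" if "t0 \<le> t" for t
  proof -
    have "x1 t + exp (- c * (t - t0)) / c \<le> x1 t0 + exp (- c * (t0 - t0)) / c"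
    proof (rule DERIV_nonpos_imp_nonincreasing[OF that])
      fix u assume u: "t0 \<le> u" "u \<le> t"
      have "DERIV (\<lambda>u. x1 u + exp (- c * (u - t0)) / c) u :> exp (- c * G u) - exp (- c * (u - t0))"
        using dx1'[of u] u t0 c by (auto intro!: derivative_eq_intros)
      moreover have "exp (- c * G u) \<le> exp (- c * (u - t0))"
        using Glow[of u] u c by simp
      ultimately show "\<exists>y. DERIV (\<lambda>u. x1 u + exp (- c * (u - t0)) / c) u :> y \<and> y \<le> 0"
        by fastforce
    qed
    moreover have "0 \<le> exp (- c * (t - t0)) / c" using c by simp
    ultimately show ?thesis by simp
  qed
  define B where "B = x1 t0 + 1 / c"
  have bnd: "x1 t \<le> B" if "0 \<le> t" for t
  proof (cases "t0 \<le> t")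
    case True then show ?thesis using x1up unfolding B_def by blast
  next
    case False
    have "0 < 1 / c" using c by simp
    then show ?thesis using mono[of t t0] that False unfolding B_def by linarith
  qed
  define L where "L = Sup (x1 ` {0..})"
  have bdd: "bdd_above (x1 ` {0..})" using bnd by (auto intro!: bdd_aboveI)
  have up: "x1 t \<le> L" if "0 \<le> t" for t
    unfolding L_def using bdd that by (intro cSup_upper) auto
  have "L > 0" using up[of 1] a1 unfolding a1_def by simp
  moreover have "(x1 \<longlongrightarrow> L) at_top"
  proof (rule order_tendstoI)
    fix a assume "a < L"
    then obtain s where s: "s \<in> {0..}" "a < x1 s"
      unfolding L_def using bdd by (subst (asm) less_cSup_iff) auto
    show "\<forall>\<^sub>F t in at_top. a < x1 t"
      unfolding eventually_at_top_linorder
      by (rule exI[of _ s]) (use s mono in \<open>auto intro: less_le_trans\<close>)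
  next
    fix a assume "L < a"
    show "\<forall>\<^sub>F t in at_top. x1 t < a"
      unfolding eventually_at_top_linorder
      by (rule exI[of _ 0]) (use up \<open>L < a\<close> in \<open>auto intro: le_less_trans\<close>)
  qed
  ultimately show ?thesis by blast
qed


lemma sol_exists:
  fixes c p :: real
  assumes c: "c > 0" and p: "p \<ge> 1"
  shows "\<exists>x x1 G :: real \<Rightarrow> real.
     (\<forall>t\<ge>0. (x has_real_derivative x1 t) (at t within {0..}) \<and>
             (x1 has_real_derivative exp (- c * G t)) (at t within {0..}) \<and>
             (G has_real_derivative x t powr p) (at t within {0..}) \<and>
             0 \<le> x t \<and> 0 \<le> G t) \<and> x 0 = 0 \<and> x1 0 = 0"
proof -
  define T where "T g = Bcontfun (\<lambda>t. FF c p (apply_bcontfun g) (max 0 t))" for g :: "real \<Rightarrow>\<^sub>C real"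
  have mem: "(\<lambda>t. FF c p (apply_bcontfun g) (max 0 t)) \<in> bcontfun" for g :: "real \<Rightarrow>\<^sub>C real"
  proof (rule bcontfun_normI)
    show "continuous_on UNIV (\<lambda>t. FF c p (apply_bcontfun g) (max 0 t))"
      by (rule continuous_on_compose2[OF FF_cont[OF c p continuous_on_apply_bcontfun]])
         (auto intro!: continuous_intros)
    fix t
    show "norm (FF c p (apply_bcontfun g) (max 0 t)) \<le> 1"
      using FF_bounds[OF c p continuous_on_apply_bcontfun[of "{0..}" g], of "max 0 t"] by simp
  qed
  have Tapp: "apply_bcontfun (T g) t = FF c p (apply_bcontfun g) (max 0 t)" for g t
    unfolding T_def using Bcontfun_inverse[OF mem] by simp
  have contr: "dist (T g) (T k) \<le> 1/2 * dist g k" for g k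
  proof (rule dist_bound)
    fix t
    have "\<bar>FF c p (apply_bcontfun g) (max 0 t) - FF c p (apply_bcontfun k) (max 0 t)\<bar> \<le> dist g k / 2"
    proof (rule FF_contract[OF c p continuous_on_apply_bcontfun continuous_on_apply_bcontfun])
      fix s :: real
      show "\<bar>apply_bcontfun g s - apply_bcontfun k s\<bar> \<le> dist g k"
        using dist_bounded[where f=g and g=k and x=s] by (simp add: dist_real_def)
    qed auto
    then show "dist (apply_bcontfun (T g) t) (apply_bcontfun (T k) t) \<le> 1/2 * dist g k"
      by (simp add: Tapp dist_real_def)
  qed
  obtain g where gfix: "T g = g"
    using banach_fix_type[of "1/2" T] contr by auto
  define f where "f = apply_bcontfun g"
  have fcont: "continuous_on {0..} f" unfolding f_def by simp
  have ff: "f t = FF c p f t" if "0 \<le> t" for t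
    using arg_cong[OF gfix, of "\<lambda>g. apply_bcontfun g t"] that unfolding f_def by (simp add: Tapp)
  have HHeq: "HH c p f t = exp (- c * GG c p f t)" if t: "0 \<le> t" for t
  proof -
    have "exp (2*c * WW p t) * f t = exp (- c * GG c p f t)"
      using ff[OF t] unfolding FF_def by (simp add: exp_add[symmetric] mult_exp_exp)
    moreover have "exp (- c * GG c p f t) \<le> 1" using GG_nonneg[OF c p fcont t] c by simp
    ultimately show ?thesis unfolding HH_def clip_def by simp
  qed
  show ?thesis
  proof (intro exI conjI allI impI)
    fix t :: real assume t: "0 \<le> t"
    show "(XX c p f has_real_derivative XX1 c p f t) (at t within {0..})"
      by (rule XX_deriv[OF c p fcont t])
    show "(XX1 c p f has_real_derivative exp (- c * GG c p f t)) (at t within {0..})"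
      using XX1_deriv[OF c p fcont t] HHeq[OF t] by simp
    show "(GG c p f has_real_derivative XX c p f t powr p) (at t within {0..})"
      by (rule GG_deriv[OF c p fcont t])
    show "0 \<le> XX c p f t" by (rule XX_bounds(1)[OF c p fcont t])
    show "0 \<le> GG c p f t" by (rule GG_nonneg[OF c p fcont t])
  qed (simp_all add: XX_def XX1_def)
qed

lemma scale_deriv:
  fixes f f' :: "real \<Rightarrow> real"
  assumes mu: "0 < \<mu>" and t: "0 \<le> t"
    and d: "\<And>s. 0 \<le> s \<Longrightarrow> (f has_real_derivative f' s) (at s within {0..})"
  shows "((\<lambda>t. a * f (\<mu> * t)) has_real_derivative a * \<mu> * f' (\<mu> * t)) (at t within {0..})"
proof -
  have img: "(\<lambda>t. \<mu> * t) ` {0..} = {0..}"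
  proof (intro set_eqI iffI)
    fix y assume "y \<in> {0::real..}"
    then have "y = \<mu> * (y / \<mu>)" "y / \<mu> \<in> {0..}" using mu by auto
    then show "y \<in> (\<lambda>t. \<mu> * t) ` {0..}" by blast
  qed (use mu in auto)
  have "(f \<circ> (\<lambda>t. \<mu> * t) has_real_derivative f' (\<mu> * t) * \<mu>) (at t within {0..})"
    by (rule DERIV_image_chain) (use d[of "\<mu> * t"] mu t img in \<open>auto intro!: derivative_eq_intros\<close>)
  then have "((\<lambda>t. f (\<mu> * t)) has_real_derivative f' (\<mu> * t) * \<mu>) (at t within {0..})"
    by (simp add: o_def)
  from DERIV_cmult[OF this, of a] show ?thesis by (simp add: algebra_simps)
qed


theorem theorem1:
  fixes p c \<beta> :: real
  assumes "p \<ge> 1" and "c > 0" and "\<beta> \<ge> 0"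
  shows "\<exists>(x::real \<Rightarrow> real) x1 x2 x3.
           (\<forall>t\<ge>0. (x has_real_derivative x1 t) (at t within {0..}) \<and>
                    (x1 has_real_derivative x2 t) (at t within {0..}) \<and>
                    (x2 has_real_derivative x3 t) (at t within {0..}) \<and>
                    x t \<ge> 0 \<and>
                    x3 t + c * (x t powr p) * x2 t = 0) \<and>
           x 0 = 0 \<and> x1 0 = 0 \<and> (x1 \<longlongrightarrow> \<beta>) at_top"
proof (cases "\<beta> = 0")
  case True
  show ?thesis
    by (rule exI[of _ "\<lambda>_. 0"])+ (auto simp: True)
next
  case False
  then have b: "\<beta> > 0" using assms(3) by simp
  have p: "p \<ge> 1" and c: "c > 0" using assms by auto
  obtain x x1 G :: "real \<Rightarrow> real" where
    d: "\<And>t. 0 \<le> t \<Longrightarrow> (x has_real_derivative x1 t) (at t within {0..}) \<and>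
             (x1 has_real_derivative exp (- c * G t)) (at t within {0..}) \<and>
             (G has_real_derivative x t powr p) (at t within {0..}) \<and>
             0 \<le> x t \<and> 0 \<le> G t" and x0: "x 0 = 0" and x10: "x1 0 = 0"
    using sol_exists[OF c p] by blast
  obtain L where L: "L > 0" "(x1 \<longlongrightarrow> L) at_top"
    using limit[OF c p, of x x1 G] d x10 by blast
  define lam where "lam = (\<beta> / L) powr (1 / (p + 1))"
  define mu where "mu = lam powr p"
  have lam: "lam > 0" unfolding lam_def using b L by simp
  have mu: "mu > 0" unfolding mu_def using lam by simp
  have lm: "lam * mu = \<beta> / L"
  proof -
    have "lam * mu = lam powr (p + 1)" unfolding mu_def using lam by (simp add: powr_add)
    also have "\<dots> = \<beta> / L" unfolding lam_def using p b L by (simp add: powr_powr)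
    finally show ?thesis .
  qed
  define e where "e t = exp (- c * G t)" for t
  have de: "(e has_real_derivative e t * (- c * x t powr p)) (at t within {0..})" if "0 \<le> t" for t
    unfolding e_def[abs_def] using d[OF that] by (auto intro!: derivative_eq_intros)
  show ?thesis
  proof (intro exI conjI allI impI)
    fix t :: real assume t: "0 \<le> t"
    show "((\<lambda>t. lam * x (mu * t)) has_real_derivative lam * mu * x1 (mu * t)) (at t within {0..})"
      by (rule scale_deriv[OF mu t]) (use d in blast)
    show "((\<lambda>t. lam * mu * x1 (mu * t)) has_real_derivative lam * mu * mu * e (mu * t)) (at t within {0..})"
      by (rule scale_deriv[OF mu t]) (use d in \<open>auto simp: e_def\<close>)
    show "((\<lambda>t. lam * mu * mu * e (mu * t)) has_real_derivative
            lam * mu * mu * mu * (e (mu * t) * (- c * x (mu * t) powr p))) (at t within {0..})"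
      by (rule scale_deriv[OF mu t]) (use de in blast)
    show "0 \<le> lam * x (mu * t)" using d[of "mu * t"] lam mu t by simp
    have "(lam * x (mu * t)) powr p = mu * x (mu * t) powr p"
      unfolding mu_def using lam d[of "mu * t"] mu t by (simp add: powr_mult)
    then show "lam * mu * mu * mu * (e (mu * t) * (- c * x (mu * t) powr p)) +
               c * (lam * x (mu * t)) powr p * (lam * mu * mu * e (mu * t)) = 0"
      by (simp add: algebra_simps)
  next
    show "lam * x (mu * 0) = 0" using x0 by simp
    show "lam * mu * x1 (mu * 0) = 0" using x10 by simp
    have "filterlim (\<lambda>t. mu * t) at_top at_top"
      using mu by (intro filterlim_tendsto_pos_mult_at_top[OF tendsto_const] filterlim_ident)
    then have "((\<lambda>t. x1 (mu * t)) \<longlongrightarrow> L) at_top"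
      using L(2) by (rule filterlim_compose[rotated])
    then have "((\<lambda>t. lam * mu * x1 (mu * t)) \<longlongrightarrow> lam * mu * L) at_top"
      by (rule tendsto_mult_left)
    then show "((\<lambda>t. lam * mu * x1 (mu * t)) \<longlongrightarrow> \<beta>) at_top"
      using lm L(1) by simp
  qed
qed

end
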